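(* Let $f(x)\in\mathbb{Q}(x)$ be a non-constant rational function. Then: (a) If $f$ satisfies WP, then $f$ has at least two distinct poles in $\mathbb{P}^1(\mathbb{R})$, or has at least one pole of odd order in $\mathbb{P}^1(\mathbb{R})$. (b) If $f(\mathbb{Q})$ is an open base and $f$ has at least one pole of odd order in $\mathbb{P}^1(\mathbb{R})$, then $f$ satisfies WP. (c) If $f$ satisfies the EWP, then $f$ has a pole in $\mathbb{P}^1(\mathbb{R})$. (d) If $f$ satisfies the EWP, then for every prime $p$, $f$ has a pole in $\mathbb{P}^1(\mathbb{Q}_p)$.
   Context: For $X\subseteq\mathbb{Q}$ and a positive integer $N$, write $X_N:=\{x_1+\cdots+x_N : x_1,\dots,x_N\in X\}$. $X$ is called a base if $X_N=\mathbb{Q}$ for some $N\ge 1$; an open base if for some $N\ge1$ and some rationals $a<b$, $X_N\supseteq (a,b)\cap\mathbb{Q}$; a virtual base if for some $N\ge 1$ every rational number can be written as $\epsilon_1x_1+\cdots+\epsilon_Nx_N$ with $x_i\in X$ and $\epsilon_i\in\{1,-1\}$. For a rational function $f\in\mathbb{Q}(x)$ and a field $F\supseteq \mathbb{Q}$, $f(F)$ denotes the set of values $f(a)$ for $a\in F$ not a pole of $f$. $f$ satisfies WP if $f(\mathbb{Q})$ is a base, and satisfies the EWP if $f(\mathbb{Q})$ is a virtual base. Poles are considered on the projective line, including the point $\infty$ (with its order as a pole of $f$). *)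

theory Defs
  imports Complex_Main "HOL-Computational_Algebra.Computational_Algebra"
begin

text \<open>A rational function f in Q(x) is represented in reduced form f = P/Q with
  P, Q :: rat poly, Q nonzero and P, Q coprime (every f has such a representation).
  All notions below take the pair (P, Q).\<close>

definition nonconstant :: "rat poly \<Rightarrow> rat poly \<Rightarrow> bool" where
  "nonconstant P Q \<longleftrightarrow> \<not> (\<exists>c::rat. P = smult c Q)"

definition ratfun_values :: "rat poly \<Rightarrow> rat poly \<Rightarrow> rat set" where
  "ratfun_values P Q = {poly P a / poly Q a | a. poly Q a \<noteq> 0}"

definition sumset :: "rat set \<Rightarrow> nat \<Rightarrow> rat set" where
  "sumset X N = {(\<Sum>i<N. x i) | x::nat \<Rightarrow> rat. \<forall>i<N. x i \<in> X}"

definition is_base :: "rat set \<Rightarrow> bool" where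
  "is_base X \<longleftrightarrow> (\<exists>N\<ge>1. sumset X N = UNIV)"

definition is_open_base :: "rat set \<Rightarrow> bool" where
  "is_open_base X \<longleftrightarrow> (\<exists>N\<ge>1. \<exists>a b::rat. a < b \<and> {q. a < q \<and> q < b} \<subseteq> sumset X N)"

definition is_virtual_base :: "rat set \<Rightarrow> bool" where
  "is_virtual_base X \<longleftrightarrow> (\<exists>N\<ge>1. \<forall>r::rat. \<exists>(x::nat \<Rightarrow> rat) (e::nat \<Rightarrow> rat).
      (\<forall>i<N. x i \<in> X \<and> (e i = 1 \<or> e i = -1)) \<and> r = (\<Sum>i<N. e i * x i))"

definition WP :: "rat poly \<Rightarrow> rat poly \<Rightarrow> bool" where "WP P Q \<longleftrightarrow> is_base (ratfun_values P Q)"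
definition EWP :: "rat poly \<Rightarrow> rat poly \<Rightarrow> bool" where "EWP P Q \<longleftrightarrow> is_virtual_base (ratfun_values P Q)"

text \<open>Poles in P^1(R): Some a for a finite real pole a (real root of the reduced
  denominator), None for the point at infinity (pole iff deg P > deg Q).\<close>
definition real_poles :: "rat poly \<Rightarrow> rat poly \<Rightarrow> real option set" where
  "real_poles P Q = Some ` {a. poly (map_poly of_rat Q) a = 0}
     \<union> (if degree Q < degree P then {None} else {})"

definition pole_order :: "rat poly \<Rightarrow> rat poly \<Rightarrow> real option \<Rightarrow> nat" where
  "pole_order P Q z = (case z of
      Some a \<Rightarrow> order a (map_poly of_rat Q)
    | None \<Rightarrow> degree P - degree Q)"

text \<open>p-adic integers as compatible sequences (inverse limit of Z/p^k Z):
  u represents an element of Z_p iff u (k+1) = u k mod p^k for all k.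
  An integer polynomial h vanishes at it iff h(u k) = 0 mod p^k for all k.
  Every element of Q_p is xi / p^m with xi in Z_p, and g(xi/p^m) = 0 iff
  sum_i g_i xi^i p^(m (deg g - i)) = 0.  A rational polynomial q has a root in Q_p
  iff some integer multiple g of it does.\<close>
definition padic_int_seq :: "nat \<Rightarrow> (nat \<Rightarrow> int) \<Rightarrow> bool" where
  "padic_int_seq p u \<longleftrightarrow> (\<forall>k. (int p ^ k) dvd (u (Suc k) - u k))"

definition has_Qp_root :: "nat \<Rightarrow> rat poly \<Rightarrow> bool" where
  "has_Qp_root p q \<longleftrightarrow> (\<exists>(g::int poly) (c::rat) (m::nat) u.
      c \<noteq> 0 \<and> q = smult c (map_poly of_int g) \<and> padic_int_seq p u \<and>
      (\<forall>k. (int p ^ k) dvd (\<Sum>i\<le>degree g. coeff g i * u k ^ i * int p ^ (m * (degree g - i)))))"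

definition has_Qp_pole :: "nat \<Rightarrow> rat poly \<Rightarrow> rat poly \<Rightarrow> bool" where
  "has_Qp_pole p P Q \<longleftrightarrow> degree Q < degree P \<or> has_Qp_root p Q"

end

theory Submission
  imports Defs "HOL-Analysis.Analysis" "HOL-Computational_Algebra.Field_as_Ring" "HOL-Number_Theory.Cong"
begin

lemma poly_of_rat: "poly (map_poly (of_rat::rat\<Rightarrow>real) p) (of_rat x) = of_rat (poly p x)"
  by (induct p) (simp_all add: map_poly_pCons of_rat_add of_rat_mult)

lemma degree_rp[simp]: "degree (map_poly (of_rat::rat\<Rightarrow>real) p) = degree p"
  by (simp add: degree_map_poly)

lemma lead_rp[simp]: "lead_coeff (map_poly (of_rat::rat\<Rightarrow>real) p) = of_rat (lead_coeff p)"
  by (simp add: coeff_map_poly)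

lemma rp_eq0[simp]: "map_poly (of_rat::rat\<Rightarrow>real) p = 0 \<longleftrightarrow> p = 0"
  by (metis degree_rp lead_rp leading_coeff_0_iff of_rat_eq_0_iff)

lemma poly_div_pow_lim:
  fixes p :: "real poly"
  shows "((\<lambda>x. poly p x / x ^ degree p) \<longlongrightarrow> lead_coeff p) at_infinity"
proof -
  have "((\<lambda>x. poly (reflect_poly p) (inverse x)) \<longlongrightarrow> poly (reflect_poly p) 0) at_infinity"
    by (intro tendsto_poly tendsto_inverse_0)
  moreover have "eventually (\<lambda>x::real. x \<noteq> 0) at_infinity"
    unfolding eventually_at_infinity by (intro exI[of _ 1]) auto
  hence "eventually (\<lambda>x. poly (reflect_poly p) (inverse x) = poly p x / x ^ degree p) at_infinity"
    by eventually_elim (simp add: poly_reflect_poly_nz field_simps power_inverse)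
  ultimately show ?thesis using Lim_transform_eventually by fastforce
qed


lemma ratfun_inf_lim:
  fixes p q :: "real poly"
  assumes "q \<noteq> 0"
  shows "((\<lambda>x. (poly p x / poly q x) * x ^ degree q / x ^ degree p) \<longlongrightarrow> lead_coeff p / lead_coeff q) at_infinity"
proof -
  have "((\<lambda>x. (poly p x / x ^ degree p) / (poly q x / x ^ degree q)) \<longlongrightarrow> lead_coeff p / lead_coeff q) at_infinity"
    using assms by (intro tendsto_divide poly_div_pow_lim) auto
  moreover have "eventually (\<lambda>x::real. x \<noteq> 0) at_infinity"
    unfolding eventually_at_infinity by (intro exI[of _ 1]) auto
  hence "eventually (\<lambda>x. (poly p x / x ^ degree p) / (poly q x / x ^ degree q) = (poly p x / poly q x) * x ^ degree q / x ^ degree p) at_infinity"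
    by eventually_elim (simp add: field_simps)
  ultimately show ?thesis using Lim_transform_eventually by fastforce
qed

lemma poly_ev_nz_inf:
  fixes q :: "real poly"
  assumes "q \<noteq> 0"
  shows "eventually (\<lambda>x. poly q x \<noteq> 0) at_infinity"
proof -
  have "eventually (\<lambda>x. poly q x / x ^ degree q \<noteq> 0) at_infinity"
    using tendsto_imp_eventually_ne[OF poly_div_pow_lim[of q], of 0] assms by auto
  thus ?thesis by eventually_elim auto
qed

lemma ratfun_inf_le:
  fixes p q :: "real poly"
  assumes "q \<noteq> 0" "degree p \<le> degree q"
  shows "\<exists>R B. \<forall>x. R \<le> \<bar>x\<bar> \<longrightarrow> poly q x \<noteq> 0 \<and> \<bar>poly p x / poly q x\<bar> \<le> B"
proof -
  define L where "L = lead_coeff p / lead_coeff q"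
  have "eventually (\<lambda>x. dist ((poly p x / poly q x) * x ^ degree q / x ^ degree p) L < 1) at_infinity"
    using tendstoD[OF ratfun_inf_lim[OF assms(1), of p]] unfolding L_def by auto
  moreover have "eventually (\<lambda>x::real. 1 \<le> \<bar>x\<bar>) at_infinity"
    unfolding eventually_at_infinity by (intro exI[of _ 1]) auto
  moreover note poly_ev_nz_inf[OF assms(1)]
  ultimately have "eventually (\<lambda>x. poly q x \<noteq> 0 \<and> \<bar>poly p x / poly q x\<bar> \<le> \<bar>L\<bar> + 1) at_infinity"
  proof eventually_elim
    case (elim x)
    define g where "g = (poly p x / poly q x) * x ^ degree q / x ^ degree p"
    have x0: "x \<noteq> 0" using elim by auto
    have e: "poly p x / poly q x = g * (x ^ degree p / x ^ degree q)"
      using x0 unfolding g_def by (simp add: field_simps)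
    have b1: "\<bar>x ^ degree p / x ^ degree q\<bar> \<le> 1"
    proof -
      have "\<bar>x\<bar> ^ degree p \<le> \<bar>x\<bar> ^ degree q" using elim assms(2) by (intro power_increasing) auto
      thus ?thesis using x0 by (simp add: abs_divide power_abs divide_le_eq_1)
    qed
    have b2: "\<bar>g\<bar> \<le> \<bar>L\<bar> + 1" using elim unfolding g_def dist_real_def by linarith
    have "\<bar>g\<bar> * \<bar>x ^ degree p / x ^ degree q\<bar> \<le> (\<bar>L\<bar> + 1) * 1" by (rule mult_mono[OF b2 b1]) auto
    hence "\<bar>poly p x / poly q x\<bar> \<le> \<bar>L\<bar> + 1" unfolding e abs_mult by simp
    thus ?case using elim by simp
  qed
  thus ?thesis unfolding eventually_at_infinity real_norm_def by blast
qed


lemma ratfun_inf_gt: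
  fixes p q :: "real poly"
  assumes "q \<noteq> 0" "degree q < degree p"
  shows "\<exists>R>0. \<exists>c>0. \<exists>s. (s = 1 \<or> s = -1) \<and>
     (\<forall>x. R \<le> \<bar>x\<bar> \<longrightarrow> poly q x \<noteq> 0 \<and> c \<le> s * (poly p x / poly q x / x ^ (degree p - degree q)))"
proof -
  define L where "L = lead_coeff p / lead_coeff q"
  have p0: "p \<noteq> 0" using assms by auto
  hence L0: "L \<noteq> 0" using assms unfolding L_def by auto
  define s :: real where "s = (if L > 0 then 1 else -1)"
  have sL: "s * L = \<bar>L\<bar>" unfolding s_def by auto
  have "eventually (\<lambda>x. dist ((poly p x / poly q x) * x ^ degree q / x ^ degree p) L < \<bar>L\<bar>/2) at_infinity"
    using tendstoD[OF ratfun_inf_lim[OF assms(1), of p]] L0 unfolding L_def by auto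
  moreover have "eventually (\<lambda>x::real. 1 \<le> \<bar>x\<bar>) at_infinity"
    unfolding eventually_at_infinity by (intro exI[of _ 1]) auto
  moreover note poly_ev_nz_inf[OF assms(1)]
  ultimately have "eventually (\<lambda>x. 1 \<le> \<bar>x\<bar> \<and> poly q x \<noteq> 0 \<and> \<bar>L\<bar>/2 \<le> s * (poly p x / poly q x / x ^ (degree p - degree q))) at_infinity"
  proof eventually_elim
    case (elim x)
    define g where "g = (poly p x / poly q x) * x ^ degree q / x ^ degree p"
    have x0: "x \<noteq> 0" using elim by auto
    have xp: "x ^ degree p = x ^ (degree p - degree q) * x ^ degree q" using assms(2) by (simp flip: power_add)
    have "g = poly p x / poly q x / x ^ (degree p - degree q)"
      using x0 unfolding g_def xp by simp
    moreover have "\<bar>L\<bar>/2 \<le> s * g"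
    proof -
      have "\<bar>g - L\<bar> < \<bar>L\<bar>/2" using elim unfolding g_def dist_real_def by simp
      moreover have "\<bar>s*g - s*L\<bar> = \<bar>g - L\<bar>" unfolding s_def by (auto simp: abs_minus_commute)
      ultimately have "\<bar>s*g - s*L\<bar> < \<bar>L\<bar>/2" by simp
      thus ?thesis using sL by linarith
    qed
    ultimately show ?case using elim by simp
  qed
  then obtain R where R: "\<forall>x. R \<le> \<bar>x\<bar> \<longrightarrow> 1 \<le> \<bar>x\<bar> \<and> poly q x \<noteq> 0 \<and> \<bar>L\<bar>/2 \<le> s * (poly p x / poly q x / x ^ (degree p - degree q))"
    unfolding eventually_at_infinity real_norm_def by blast
  show ?thesis
    apply (rule exI[of _ "max R 1"])
    apply (rule conjI, simp)
    apply (rule exI[of _ "\<bar>L\<bar>/2"])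
    apply (rule conjI) using L0 apply simp
    apply (rule exI[of _ s])
    apply (rule conjI) apply (simp add: s_def)
    using R by auto
qed


lemma ratfun_root:
  fixes p q :: "real poly"
  assumes "q \<noteq> 0" "poly p a \<noteq> 0"
  shows "\<exists>\<delta>>0. \<exists>c>0. \<exists>s. (s = 1 \<or> s = -1) \<and>
     (\<forall>x. 0 < \<bar>x - a\<bar> \<and> \<bar>x - a\<bar> < \<delta> \<longrightarrow> poly q x \<noteq> 0 \<and> c \<le> s * (poly p x / poly q x * (x - a) ^ order a q))"
proof -
  obtain q1 where q1: "q = [:- a, 1:] ^ order a q * q1" "\<not> [:- a, 1:] dvd q1"
    using order_decomp[OF assms(1)] by blast
  have q1a: "poly q1 a \<noteq> 0" using q1(2) by (simp add: poly_eq_0_iff_dvd)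
  define L where "L = poly p a / poly q1 a"
  have L0: "L \<noteq> 0" using q1a assms(2) unfolding L_def by simp
  define s :: real where "s = (if L > 0 then 1 else -1)"
  have sL: "s * L = \<bar>L\<bar>" unfolding s_def by auto
  have lim: "((\<lambda>x. poly p x / poly q1 x) \<longlongrightarrow> L) (at a)"
    unfolding L_def using q1a by (intro tendsto_divide tendsto_poly tendsto_ident_at) auto
  have lim2: "((\<lambda>x. poly q1 x) \<longlongrightarrow> poly q1 a) (at a)"
    by (intro tendsto_poly tendsto_ident_at)
  have "eventually (\<lambda>x. dist (poly p x / poly q1 x) L < \<bar>L\<bar>/2) (at a)"
    by (intro tendstoD[OF lim]) (simp add: L0)
  moreover have "eventually (\<lambda>x. poly q1 x \<noteq> 0) (at a)"
    using tendsto_imp_eventually_ne[OF lim2 q1a] .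
  ultimately have "eventually (\<lambda>x. poly q1 x \<noteq> 0 \<and> \<bar>L\<bar>/2 \<le> s * (poly p x / poly q1 x)) (at a)"
  proof eventually_elim
    case (elim x)
    define g where "g = poly p x / poly q1 x"
    have "\<bar>g - L\<bar> < \<bar>L\<bar>/2" using elim unfolding g_def dist_real_def by simp
    moreover have "\<bar>s*g - s*L\<bar> = \<bar>g - L\<bar>" unfolding s_def by (auto simp: abs_minus_commute)
    ultimately have "\<bar>s*g - s*L\<bar> < \<bar>L\<bar>/2" by simp
    hence "\<bar>L\<bar>/2 \<le> s * g" using sL by linarith
    thus ?case using elim unfolding g_def by simp
  qed
  then obtain d where d: "d > 0" "\<forall>x. x \<noteq> a \<and> dist x a < d \<longrightarrow> poly q1 x \<noteq> 0 \<and> \<bar>L\<bar>/2 \<le> s * (poly p x / poly q1 x)"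
    unfolding eventually_at by auto
  have pq: "poly q x = (x - a) ^ order a q * poly q1 x" for x
    by (subst q1(1)) (simp add: poly_power)
  have main: "poly q x \<noteq> 0 \<and> \<bar>L\<bar>/2 \<le> s * (poly p x / poly q x * (x - a) ^ order a q)"
    if x: "0 < \<bar>x - a\<bar> \<and> \<bar>x - a\<bar> < d" for x
  proof -
    from x have xa: "x \<noteq> a" "dist x a < d" by (auto simp: dist_real_def)
    hence q1x: "poly q1 x \<noteq> 0" and b: "\<bar>L\<bar>/2 \<le> s * (poly p x / poly q1 x)" using d by auto
    have "poly p x / poly q x * (x - a) ^ order a q = poly p x / poly q1 x"
      using xa q1x by (simp add: pq)
    thus ?thesis using b q1x xa by (simp add: pq)
  qed
  have c0: "\<bar>L\<bar>/2 > 0" using L0 by simp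
  have s1: "s = 1 \<or> s = -1" by (simp add: s_def)
  show ?thesis using main d(1) c0 s1 by blast
qed


lemma rp_mult: "map_poly (of_rat::rat\<Rightarrow>real) (p*q) = map_poly of_rat p * map_poly of_rat q"
  by (rule poly_eqI) (simp add: coeff_map_poly coeff_mult of_rat_sum of_rat_mult)

lemma rp_add: "map_poly (of_rat::rat\<Rightarrow>real) (p+q) = map_poly of_rat p + map_poly of_rat q"
  by (rule poly_eqI) (simp add: coeff_map_poly of_rat_add)

lemma coprime_no_common_root:
  fixes P Q :: "rat poly"
  assumes "coprime P Q"
  shows "\<not> (poly (map_poly of_rat P) x = 0 \<and> poly (map_poly of_rat Q) (x::real) = 0)"
proof
  assume h: "poly (map_poly of_rat P) x = 0 \<and> poly (map_poly of_rat Q) (x::real) = 0"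
  define A where "A = fst (bezout_coefficients P Q)"
  define B where "B = snd (bezout_coefficients P Q)"
  have "A * P + B * Q = 1"
    using bezout_coefficients_fst_snd[of P Q] assms unfolding A_def B_def
    by (simp add: coprime_iff_gcd_eq_1)
  hence "map_poly (of_rat::rat\<Rightarrow>real) (A * P + B * Q) = 1" by simp
  hence "poly (map_poly (of_rat::rat\<Rightarrow>real) (A * P + B * Q)) x = 1" by simp
  thus False using h by (simp add: rp_add rp_mult)
qed

lemma val_link:
  fixes P Q :: "rat poly"
  shows "of_rat (poly P a / poly Q a) = poly (map_poly of_rat P) (of_rat a) / poly (map_poly of_rat Q) (of_rat a :: real)"
    and "poly (map_poly of_rat Q) (of_rat a :: real) = 0 \<longleftrightarrow> poly Q a = 0"
  by (simp_all add: poly_of_rat of_rat_divide)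


lemma compact_bound:
  fixes g :: "real \<Rightarrow> real"
  assumes "compact K" "continuous_on K g"
  shows "\<exists>B. \<forall>x\<in>K. \<bar>g x\<bar> \<le> B"
proof -
  have "bounded (g ` K)" using compact_continuous_image[OF assms(2,1)] compact_imp_bounded by blast
  thus ?thesis unfolding bounded_real by auto
qed

lemma dens:
  fixes g :: "real \<Rightarrow> real"
  assumes "open S" "connected S" "continuous_on S g" "x0 \<in> S" "\<forall>M. \<exists>x\<in>S. M < g x"
    and "g x0 \<le> c" "c < d"
  shows "\<exists>q\<in>\<rat>. q \<in> S \<and> c < g q \<and> g q < d"
proof -
  obtain x1 where x1: "x1 \<in> S" "d < g x1" using assms(5) by blast
  define y where "y = (c + d) / 2"
  have conn: "connected (g ` S)" using connected_continuous_image[OF assms(3,2)] .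
  have i0: "g x0 \<in> g ` S" using assms(4) by (rule imageI)
  have i1: "g x1 \<in> g ` S" using x1(1) by (rule imageI)
  have l0: "g x0 \<bullet> (1::real) \<le> y" using assms(6,7) unfolding y_def inner_real_def by simp
  have l1: "y \<le> g x1 \<bullet> (1::real)" using assms(7) x1(2) unfolding y_def inner_real_def by simp
  obtain w where w: "w \<in> g ` S" "w \<bullet> (1::real) = y"
    using connected_ivt_component[OF conn i0 i1 l0 l1] by (elim bexE)
  then obtain z where z: "z \<in> S" "g z = y" unfolding inner_real_def by auto
  have "isCont g z" using assms(3) z(1) unfolding continuous_on_eq_continuous_at[OF assms(1)] by (rule bspec)
  moreover have dc: "(d - c) / 2 > 0" using assms(7) by simp
  ultimately obtain e1 where e1: "e1 > 0" "\<And>x. dist x z < e1 \<Longrightarrow> dist (g x) (g z) < (d - c) / 2"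
    unfolding continuous_at_eps_delta by meson
  obtain e2 where e2: "e2 > 0" "ball z e2 \<subseteq> S" using assms(1) z(1) open_contains_ball by blast
  define e where "e = min e1 e2"
  have "e > 0" using e1 e2 unfolding e_def by auto
  then obtain q where q: "q \<in> \<rat>" "z < q" "q < z + e" using Rats_dense_in_real[of z "z + e"] by auto
  have dq: "dist q z < e" using q by (simp add: dist_real_def)
  have qS: "q \<in> S" using dq e2(2) unfolding e_def by (auto simp: dist_commute)
  have "dist (g q) y < (d - c) / 2" using dq e1(2)[of q] z(2) unfolding e_def by simp
  hence "c < g q \<and> g q < d" unfolding y_def dist_real_def by (auto simp: abs_less_iff field_simps)
  thus ?thesis using q qS by blast
qed


lemma sumset_extend2:
  assumes "s \<in> sumset V N" "y1 \<in> V" "y2 \<in> V"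
  shows "s + y1 + y2 \<in> sumset V (Suc (Suc N))"
proof -
  obtain x where x: "s = (\<Sum>i<N. x i)" "\<forall>i<N. x i \<in> V" using assms(1) unfolding sumset_def by blast
  define x' where "x' i = (if i < N then x i else if i = N then y1 else y2)" for i
  have "(\<Sum>i<Suc (Suc N). x' i) = (\<Sum>i<N. x' i) + y1 + y2"
    by (simp add: x'_def)
  also have "(\<Sum>i<N. x' i) = (\<Sum>i<N. x i)" by (rule sum.cong) (auto simp: x'_def)
  finally have "s + y1 + y2 = (\<Sum>i<Suc (Suc N). x' i)" using x by simp
  moreover have "\<forall>i<Suc (Suc N). x' i \<in> V" using x assms by (auto simp: x'_def)
  ultimately show ?thesis unfolding sumset_def by blast
qed

lemma partb_comb:
  fixes V :: "rat set"
  assumes up: "\<exists>M. \<forall>c d. M \<le> c \<longrightarrow> c < d \<longrightarrow> (\<exists>v\<in>V. c < v \<and> v < d)"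
    and down: "\<exists>M. \<forall>c d. M \<le> c \<longrightarrow> c < d \<longrightarrow> (\<exists>v\<in>V. c < - v \<and> - v < d)"
    and ob: "is_open_base V"
  shows "is_base V"
proof -
  obtain N a b where N: "N \<ge> 1" "a < b" "{q. a < q \<and> q < b} \<subseteq> sumset V N"
    using ob unfolding is_open_base_def by blast
  obtain M1 where M1: "\<forall>c d. M1 \<le> c \<longrightarrow> c < d \<longrightarrow> (\<exists>v\<in>V. c < v \<and> v < d)" using up by blast
  obtain M2 where M2: "\<forall>c d. M2 \<le> c \<longrightarrow> c < d \<longrightarrow> (\<exists>v\<in>V. c < - v \<and> - v < d)" using down by blast
  have "r \<in> sumset V (Suc (Suc N))" for r
  proof -
    define c1 where "c1 = \<bar>M1\<bar> + \<bar>r\<bar> + \<bar>a\<bar> + \<bar>M2\<bar> + 1"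
    have "M1 \<le> c1" unfolding c1_def using abs_ge_self[of M1] abs_ge_zero[of r] abs_ge_zero[of a] abs_ge_zero[of M2] by linarith
    hence "\<exists>v\<in>V. c1 < v \<and> v < c1 + 1" using M1 by simp
    then obtain y1 where y1: "y1 \<in> V" "c1 < y1" "y1 < c1 + 1" by blast
    define t where "t = r - y1"
    have "M2 \<le> a - t" using y1 unfolding t_def c1_def by linarith
    then obtain y2 where y2: "y2 \<in> V" "a - t < - y2" "- y2 < b - t" using M2[rule_format, of "a - t" "b - t"] N(2) by auto
    have "r - y1 - y2 \<in> sumset V N" using N(3) y2 unfolding t_def by auto
    from sumset_extend2[OF this y1(1) y2(1)] show ?thesis by simp
  qed
  hence "sumset V (Suc (Suc N)) = UNIV" by auto
  thus ?thesis unfolding is_base_def by (intro exI[of _ "Suc (Suc N)"]) simp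
qed

lemma bridge:
  fixes P Q :: "rat poly" and S :: "real set" and \<sigma> :: rat
  assumes "open S" "connected S" "xz \<in> S" "\<forall>x\<in>S. poly (map_poly of_rat Q) x \<noteq> 0"
    and "\<forall>M. \<exists>x\<in>S. M < of_rat \<sigma> * (poly (map_poly of_rat P) x / poly (map_poly of_rat Q) x)"
  shows "\<exists>M. \<forall>c d. M \<le> c \<longrightarrow> c < d \<longrightarrow> (\<exists>v\<in>ratfun_values P Q. c < \<sigma> * v \<and> \<sigma> * v < d)"
proof -
  define g where "g x = of_rat \<sigma> * (poly (map_poly of_rat P) x / poly (map_poly of_rat Q) x)" for x :: real
  have cont: "continuous_on S g" unfolding g_def using assms(4)
    by (intro continuous_intros) auto
  define M :: rat where "M = of_int \<lceil>g xz\<rceil>"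
  have "\<forall>c d. M \<le> c \<longrightarrow> c < d \<longrightarrow> (\<exists>v\<in>ratfun_values P Q. c < \<sigma> * v \<and> \<sigma> * v < d)"
  proof (intro allI impI)
    fix c d :: rat assume cd: "M \<le> c" "c < d"
    have "g xz \<le> of_rat M" unfolding M_def by simp
    also have "\<dots> \<le> of_rat c" using cd(1) by (simp add: of_rat_less_eq)
    finally have gc: "g xz \<le> of_rat c" .
    have "(of_rat c :: real) < of_rat d" using cd(2) by (simp add: of_rat_less)
    then obtain q where q: "q \<in> \<rat>" "q \<in> S" "of_rat c < g q" "g q < of_rat d"
      using dens[OF assms(1,2) cont assms(3) _ gc] assms(5) unfolding g_def by blast
    from q(1) obtain a where a: "q = of_rat a" by (auto elim: Rats_cases)
    have Qa: "poly Q a \<noteq> 0" using assms(4) q(2) a val_link(2) by blast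
    define v where "v = poly P a / poly Q a"
    have vV: "v \<in> ratfun_values P Q" using Qa unfolding v_def ratfun_values_def by blast
    have "of_rat (\<sigma> * v) = g q" unfolding g_def v_def a by (simp add: of_rat_mult of_rat_divide poly_of_rat)
    hence "c < \<sigma> * v \<and> \<sigma> * v < d" using q(3,4) by (metis of_rat_less)
    thus "\<exists>v\<in>ratfun_values P Q. c < \<sigma> * v \<and> \<sigma> * v < d" using vV by blast
  qed
  thus ?thesis by blast
qed


definition Dp :: "rat set \<Rightarrow> rat \<Rightarrow> bool" where
  "Dp V \<sigma> \<longleftrightarrow> (\<exists>M. \<forall>c d. M \<le> c \<longrightarrow> c < d \<longrightarrow> (\<exists>v\<in>V. c < \<sigma> * v \<and> \<sigma> * v < d))"

lemma grow1:
  fixes c A x :: real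
  assumes "c > 0" "k \<ge> 1" "x \<ge> 1" "c \<le> A"
  shows "c * x \<le> A * x ^ k"
proof -
  have "x ^ 1 \<le> x ^ k" using assms by (intro power_increasing) auto
  thus ?thesis using assms by (intro mult_mono) auto
qed

lemma big_pick:
  fixes c M y :: real
  assumes "c > 0" "y \<ge> \<bar>M\<bar> / c + 1"
  shows "M < c * y"
proof -
  have "c * y \<ge> c * (\<bar>M\<bar> / c + 1)" using assms by (intro mult_left_mono) auto
  also have "c * (\<bar>M\<bar> / c + 1) = \<bar>M\<bar> + c" using assms by (simp add: field_simps)
  finally show ?thesis using assms abs_ge_self[of M] by linarith
qed

lemma sigma_of_real:
  fixes s :: real
  assumes "s = 1 \<or> s = -1"
  obtains \<sigma> :: rat where "\<sigma> = 1 \<or> \<sigma> = -1" "of_rat \<sigma> = s"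
  using assms by (metis of_rat_1 of_rat_minus)

lemma odd_inf:
  fixes P Q :: "rat poly"
  assumes "Q \<noteq> 0" "degree Q < degree P" "odd (degree P - degree Q)"
  shows "\<exists>\<sigma>. (\<sigma> = 1 \<or> \<sigma> = -1) \<and> Dp (ratfun_values P Q) \<sigma> \<and> Dp (ratfun_values P Q) (-\<sigma>)"
proof -
  define P' where "P' = map_poly (of_rat :: rat \<Rightarrow> real) P"
  define Q' where "Q' = map_poly (of_rat :: rat \<Rightarrow> real) Q"
  define k where "k = degree P - degree Q"
  have k1: "k \<ge> 1" using assms(2) unfolding k_def by simp
  have "Q' \<noteq> 0" "degree Q' < degree P'" using assms unfolding P'_def Q'_def by auto
  from ratfun_inf_gt[OF this] obtain R c s where R: "R > 0" "c > 0" "s = 1 \<or> s = -1"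
    "\<forall>x. R \<le> \<bar>x\<bar> \<longrightarrow> poly Q' x \<noteq> 0 \<and> c \<le> s * (poly P' x / poly Q' x / x ^ k)"
    unfolding P'_def Q'_def k_def by auto
  obtain \<sigma> where \<sigma>: "\<sigma> = 1 \<or> \<sigma> = -1" "of_rat \<sigma> = s" using sigma_of_real[OF R(3)] by blast
  define F where "F x = poly P' x / poly Q' x" for x
  have Fx: "s * F x = (s * (F x / x ^ k)) * x ^ k" if "x \<noteq> 0" for x using that by simp
  have D1: "Dp (ratfun_values P Q) \<sigma>"
  proof -
    have "\<forall>M. \<exists>x\<in>{R<..}. M < of_rat \<sigma> * (poly P' x / poly Q' x)"
    proof
      fix M :: real
      define y where "y = max R 1 + \<bar>M\<bar> / c + 1"
      have Mc: "\<bar>M\<bar> / c \<ge> 0" using R(2) by simp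
      have y: "y > R" "y \<ge> 1" "y \<ge> \<bar>M\<bar> / c + 1" unfolding y_def using Mc by (auto simp: max_def)
      hence A: "c \<le> s * (F y / y ^ k)" using R(4) unfolding F_def by auto
      have "M < c * y" using big_pick[OF R(2) y(3)] .
      also have "\<dots> \<le> (s * (F y / y ^ k)) * y ^ k" using grow1[OF R(2) k1 y(2) A] .
      also have "\<dots> = s * F y" using Fx[of y] y by simp
      finally show "\<exists>x\<in>{R<..}. M < of_rat \<sigma> * (poly P' x / poly Q' x)" using y \<sigma>(2) unfolding F_def by auto
    qed
    moreover have "\<forall>x\<in>{R<..}. poly Q' x \<noteq> 0" using R(4) by auto
    ultimately show ?thesis unfolding Dp_def P'_def Q'_def
      using bridge[where S="{R<..}" and xz="R + 1" and Q=Q and P=P and \<sigma>=\<sigma>] by auto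
  qed
  have D2: "Dp (ratfun_values P Q) (-\<sigma>)"
  proof -
    have "\<forall>M. \<exists>x\<in>{..<-R}. M < of_rat (-\<sigma>) * (poly P' x / poly Q' x)"
    proof
      fix M :: real
      define y where "y = max R 1 + \<bar>M\<bar> / c + 1"
      have Mc: "\<bar>M\<bar> / c \<ge> 0" using R(2) by simp
      have y: "y > R" "y \<ge> 1" "y \<ge> \<bar>M\<bar> / c + 1" unfolding y_def using Mc by (auto simp: max_def)
      hence A: "c \<le> s * (F (-y) / (-y) ^ k)" using R(4) unfolding F_def by auto
      have odd: "(-y) ^ k = - (y ^ k)" using assms(3) unfolding k_def by (simp add: power_minus_odd)
      have "M < c * y" using big_pick[OF R(2) y(3)] .
      also have "\<dots> \<le> (s * (F (-y) / (-y) ^ k)) * y ^ k" using grow1[OF R(2) k1 y(2) A] .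
      also have "\<dots> = - s * F (-y)" using y odd by simp
      finally show "\<exists>x\<in>{..<-R}. M < of_rat (-\<sigma>) * (poly P' x / poly Q' x)"
        using y \<sigma>(2) unfolding F_def by (intro bexI[of _ "-y"]) (auto simp: of_rat_minus)
    qed
    moreover have "\<forall>x\<in>{..<-R}. poly Q' x \<noteq> 0" using R(4) by auto
    ultimately show ?thesis unfolding Dp_def P'_def Q'_def
      using bridge[where S="{..<-R}" and xz="-R - 1" and Q=Q and P=P and \<sigma>="-\<sigma>"] by auto
  qed
  show ?thesis using \<sigma>(1) D1 D2 by blast
qed


lemma shrink1:
  fixes c A t :: real
  assumes "c > 0" "0 < t" "t \<le> 1" "k \<ge> 1" "c \<le> A * t ^ k"
  shows "c / t \<le> A"
proof -
  have tk: "t ^ k \<le> t ^ 1" using assms by (intro power_decreasing) auto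
  have tk0: "t ^ k > 0" using assms by simp
  have A0: "A > 0" using assms tk0 by (metis mult_nonpos_nonneg less_le_trans not_less less_imp_le)
  have "A * t ^ k \<le> A * t ^ 1" using mult_left_mono[OF tk, of A] A0 by simp
  hence "c \<le> A * t" using assms(5) by simp
  thus ?thesis using assms(2) by (simp add: divide_le_eq mult.commute)
qed

lemma small_pick:
  fixes c M t :: real
  assumes "c > 0" "0 < t" "t \<le> c / (\<bar>M\<bar> + 1)"
  shows "M < c / t"
proof -
  have "t * (\<bar>M\<bar> + 1) \<le> c" using assms(3) by (simp add: le_divide_eq)
  hence "\<bar>M\<bar> + 1 \<le> c / t" using assms(2) by (simp add: le_divide_eq mult.commute)
  thus ?thesis using abs_ge_self[of M] by linarith
qed

lemma odd_root:
  fixes P Q :: "rat poly"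
  assumes "Q \<noteq> 0" "coprime P Q" "poly (map_poly of_rat Q) a = (0::real)" "odd (order a (map_poly (of_rat :: rat \<Rightarrow> real) Q))"
  shows "\<exists>\<sigma>. (\<sigma> = 1 \<or> \<sigma> = -1) \<and> Dp (ratfun_values P Q) \<sigma> \<and> Dp (ratfun_values P Q) (-\<sigma>)"
proof -
  define P' where "P' = map_poly (of_rat :: rat \<Rightarrow> real) P"
  define Q' where "Q' = map_poly (of_rat :: rat \<Rightarrow> real) Q"
  define k where "k = order a Q'"
  have k1: "k \<ge> 1" using assms(4) unfolding k_def Q'_def by (cases "order a (map_poly (of_rat :: rat \<Rightarrow> real) Q)") auto
  have Pa: "poly P' a \<noteq> 0" using coprime_no_common_root[OF assms(2), of a] assms(3) unfolding P'_def by auto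
  have "Q' \<noteq> 0" using assms unfolding Q'_def by auto
  from ratfun_root[OF this Pa] obtain \<delta> c s where R: "\<delta> > 0" "c > 0" "s = 1 \<or> s = -1"
    "\<forall>x. 0 < \<bar>x - a\<bar> \<and> \<bar>x - a\<bar> < \<delta> \<longrightarrow> poly Q' x \<noteq> 0 \<and> c \<le> s * (poly P' x / poly Q' x * (x - a) ^ k)"
    unfolding k_def by blast
  obtain \<sigma> where \<sigma>: "\<sigma> = 1 \<or> \<sigma> = -1" "of_rat \<sigma> = s" using sigma_of_real[OF R(3)] by blast
  define F where "F x = poly P' x / poly Q' x" for x
  have pick: "\<exists>t. 0 < t \<and> t \<le> 1 \<and> t < \<delta> \<and> t \<le> c / (\<bar>M\<bar> + 1)" for M :: real
  proof -
    have "c / (\<bar>M\<bar> + 1) > 0" using R(2) by (simp add: add_pos_nonneg)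
    thus ?thesis using R(1) by (intro exI[of _ "min (\<delta>/2) (min 1 (c / (\<bar>M\<bar> + 1)))"]) auto
  qed
  have D1: "Dp (ratfun_values P Q) \<sigma>"
  proof -
    have "\<forall>M. \<exists>x\<in>{a<..<a+\<delta>}. M < of_rat \<sigma> * (poly P' x / poly Q' x)"
    proof
      fix M :: real
      obtain t where t: "0 < t" "t \<le> 1" "t < \<delta>" "t \<le> c / (\<bar>M\<bar> + 1)" using pick by blast
      have A: "c \<le> (s * F (a + t)) * t ^ k" using R(4)[rule_format, of "a + t"] t unfolding F_def by (simp add: mult.assoc)
      have "M < c / t" using small_pick[OF R(2) t(1) t(4)] .
      also have "\<dots> \<le> s * F (a + t)" using shrink1[OF R(2) t(1) t(2) k1 A] .
      finally show "\<exists>x\<in>{a<..<a+\<delta>}. M < of_rat \<sigma> * (poly P' x / poly Q' x)"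
        using t \<sigma>(2) unfolding F_def by (intro bexI[of _ "a + t"]) auto
    qed
    moreover have "\<forall>x\<in>{a<..<a+\<delta>}. poly Q' x \<noteq> 0" using R(4) by auto
    ultimately show ?thesis unfolding Dp_def P'_def Q'_def
      using bridge[where S="{a<..<a+\<delta>}" and xz="a + \<delta>/2" and Q=Q and P=P and \<sigma>=\<sigma>] R(1) by auto
  qed
  have D2: "Dp (ratfun_values P Q) (-\<sigma>)"
  proof -
    have "\<forall>M. \<exists>x\<in>{a-\<delta><..<a}. M < of_rat (-\<sigma>) * (poly P' x / poly Q' x)"
    proof
      fix M :: real
      obtain t where t: "0 < t" "t \<le> 1" "t < \<delta>" "t \<le> c / (\<bar>M\<bar> + 1)" using pick by blast
      have odd: "(-t) ^ k = - (t ^ k)" using assms(4) unfolding k_def Q'_def by (simp add: power_minus_odd)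
      have "c \<le> s * (F (a - t) * (-t) ^ k)" using R(4)[rule_format, of "a - t"] t unfolding F_def by simp
      hence A: "c \<le> (- s * F (a - t)) * t ^ k" using odd by simp
      have "M < c / t" using small_pick[OF R(2) t(1) t(4)] .
      also have "\<dots> \<le> - s * F (a - t)" using shrink1[OF R(2) t(1) t(2) k1 A] .
      finally show "\<exists>x\<in>{a-\<delta><..<a}. M < of_rat (-\<sigma>) * (poly P' x / poly Q' x)"
        using t \<sigma>(2) unfolding F_def by (intro bexI[of _ "a - t"]) (auto simp: of_rat_minus)
    qed
    moreover have "\<forall>x\<in>{a-\<delta><..<a}. poly Q' x \<noteq> 0" using R(4) by auto
    ultimately show ?thesis unfolding Dp_def P'_def Q'_def
      using bridge[where S="{a-\<delta><..<a}" and xz="a - \<delta>/2" and Q=Q and P=P and \<sigma>="-\<sigma>"] R(1) by auto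
  qed
  show ?thesis using \<sigma>(1) D1 D2 by blast
qed


lemma poles_None: "None \<in> real_poles P Q \<longleftrightarrow> degree Q < degree P"
  unfolding real_poles_def by auto

lemma poles_Some: "Some a \<in> real_poles P Q \<longleftrightarrow> poly (map_poly of_rat Q) a = 0"
  unfolding real_poles_def by auto

lemma partb:
  fixes P Q :: "rat poly"
  assumes "Q \<noteq> 0" "coprime P Q" "is_open_base (ratfun_values P Q)"
    "\<exists>z\<in>real_poles P Q. odd (pole_order P Q z)"
  shows "WP P Q"
proof -
  obtain z where z: "z \<in> real_poles P Q" "odd (pole_order P Q z)" using assms(4) by blast
  have "\<exists>\<sigma>. (\<sigma> = 1 \<or> \<sigma> = -1) \<and> Dp (ratfun_values P Q) \<sigma> \<and> Dp (ratfun_values P Q) (-\<sigma>)"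
  proof (cases z)
    case None
    thus ?thesis using z odd_inf[OF assms(1)] poles_None unfolding pole_order_def by auto
  next
    case (Some a)
    thus ?thesis using z odd_root[OF assms(1,2)] poles_Some unfolding pole_order_def by auto
  qed
  then obtain \<sigma> where \<sigma>: "\<sigma> = 1 \<or> \<sigma> = -1" "Dp (ratfun_values P Q) \<sigma>" "Dp (ratfun_values P Q) (-\<sigma>)" by blast
  have "Dp (ratfun_values P Q) 1 \<and> Dp (ratfun_values P Q) (-1)" using \<sigma> by auto
  hence "is_base (ratfun_values P Q)" using partb_comb[OF _ _ assms(3)] unfolding Dp_def by simp
  thus ?thesis unfolding WP_def .
qed

lemma notbase_of_bounded:
  fixes V :: "rat set"
  assumes "\<sigma> = 1 \<or> \<sigma> = -1" "\<forall>v\<in>V. -B \<le> \<sigma> * v"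
  shows "\<not> is_base V"
proof
  assume "is_base V"
  then obtain N where N: "N \<ge> 1" "sumset V N = UNIV" unfolding is_base_def by blast
  define r where "r = - \<sigma> * (of_nat N * \<bar>B\<bar> + 1)"
  have "r \<in> sumset V N" using N by simp
  then obtain x where x: "r = (\<Sum>i<N. x i)" "\<forall>i<N. x i \<in> V" unfolding sumset_def by blast
  have "(\<Sum>i<N. - \<bar>B\<bar>) \<le> (\<Sum>i<N. \<sigma> * x i)"
  proof (rule sum_mono)
    fix i assume "i \<in> {..<N}"
    hence "-B \<le> \<sigma> * x i" using x(2) assms(2) by auto
    thus "- \<bar>B\<bar> \<le> \<sigma> * x i" using abs_ge_self[of B] by linarith
  qed
  hence "- (of_nat N * \<bar>B\<bar>) \<le> \<sigma> * r" unfolding x(1) by (simp add: sum_distrib_left)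
  moreover have "\<sigma> * r = - (of_nat N * \<bar>B\<bar> + 1)" using assms(1) unfolding r_def by auto
  ultimately show False by linarith
qed

lemma notvbase_of_bounded:
  fixes V :: "rat set"
  assumes "\<forall>v\<in>V. \<bar>v\<bar> \<le> B"
  shows "\<not> is_virtual_base V"
proof
  assume "is_virtual_base V"
  then obtain N where N: "N \<ge> 1" "\<forall>r::rat. \<exists>(x::nat \<Rightarrow> rat) (e::nat \<Rightarrow> rat).
      (\<forall>i<N. x i \<in> V \<and> (e i = 1 \<or> e i = -1)) \<and> r = (\<Sum>i<N. e i * x i)" unfolding is_virtual_base_def by blast
  define r where "r = of_nat N * \<bar>B\<bar> + 1"
  obtain x e where xe: "\<forall>i<N. x i \<in> V \<and> (e i = 1 \<or> e i = -1)" "r = (\<Sum>i<N. e i * x i)" using N(2) by blast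
  have "\<bar>r\<bar> \<le> (\<Sum>i<N. \<bar>e i * x i\<bar>)" unfolding xe(2) by (rule sum_abs)
  also have "\<dots> \<le> (\<Sum>i<N. \<bar>B\<bar>)"
  proof (rule sum_mono)
    fix i assume "i \<in> {..<N}"
    hence "x i \<in> V" "e i = 1 \<or> e i = -1" using xe(1) by auto
    thus "\<bar>e i * x i\<bar> \<le> \<bar>B\<bar>" using assms by (auto simp: abs_mult)
  qed
  also have "\<dots> = of_nat N * \<bar>B\<bar>" by simp
  finally show False unfolding r_def by simp
qed

lemma glue_bound:
  fixes F :: "real \<Rightarrow> real"
  assumes "compact K" "continuous_on K F" "\<forall>x. x \<notin> K \<longrightarrow> C x \<longrightarrow> L \<le> F x"
  shows "\<exists>B. \<forall>x. C x \<longrightarrow> -B \<le> F x"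
proof -
  obtain B2 where "\<forall>x\<in>K. \<bar>F x\<bar> \<le> B2" using compact_bound[OF assms(1,2)] by blast
  hence "\<forall>x. C x \<longrightarrow> - max B2 (-L) \<le> F x" using assms(3) by (smt (verit))
  thus ?thesis by blast
qed

lemma rat_bound_transfer:
  fixes P Q :: "rat poly" and \<sigma> :: rat
  assumes "\<forall>x. poly (map_poly of_rat Q) x \<noteq> 0 \<longrightarrow> -B \<le> of_rat \<sigma> * (poly (map_poly of_rat P) x / poly (map_poly of_rat Q) (x::real))"
  shows "\<exists>B'. \<forall>v\<in>ratfun_values P Q. -B' \<le> \<sigma> * v"
proof -
  obtain B' :: rat where B': "B \<le> of_rat B'" by (metis of_rat_of_int_eq le_of_int_ceiling)
  have "-B' \<le> \<sigma> * v" if vv: "v \<in> ratfun_values P Q" for v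
  proof -
    obtain a where a: "poly Q a \<noteq> 0" "v = poly P a / poly Q a" using vv unfolding ratfun_values_def by blast
    have "poly (map_poly of_rat Q) (of_rat a :: real) \<noteq> 0" using a(1) val_link(2) by blast
    hence "-B \<le> of_rat \<sigma> * of_rat v" using assms a(2) by (simp add: val_link(1))
    hence "of_rat (-B') \<le> (of_rat (\<sigma> * v) :: real)" using B' by (simp add: of_rat_mult of_rat_minus)
    thus ?thesis by (simp only: of_rat_less_eq)
  qed
  thus ?thesis by blast
qed


lemma bounded_case:
  fixes P Q :: "rat poly"
  assumes "Q \<noteq> 0" "degree P \<le> degree Q" "\<forall>x. poly (map_poly of_rat Q) (x::real) \<noteq> 0" "\<sigma> = 1 \<or> \<sigma> = -1"
  shows "\<exists>B. \<forall>v\<in>ratfun_values P Q. -B \<le> \<sigma> * v"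
proof -
  define P' where "P' = map_poly (of_rat :: rat \<Rightarrow> real) P"
  define Q' where "Q' = map_poly (of_rat :: rat \<Rightarrow> real) Q"
  have "Q' \<noteq> 0" "degree P' \<le> degree Q'" using assms unfolding P'_def Q'_def by auto
  from ratfun_inf_le[OF this] obtain R B1 where R: "\<forall>x. R \<le> \<bar>x\<bar> \<longrightarrow> poly Q' x \<noteq> 0 \<and> \<bar>poly P' x / poly Q' x\<bar> \<le> B1" by blast
  define F where "F x = of_rat \<sigma> * (poly P' x / poly Q' x)" for x
  have cont: "continuous_on {-R..R} F" unfolding F_def using assms(3) unfolding Q'_def
    by (intro continuous_intros) auto
  have out: "\<forall>x. x \<notin> {-R..R} \<longrightarrow> poly Q' x \<noteq> 0 \<longrightarrow> -B1 \<le> F x"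
  proof (intro allI impI)
    fix x assume "x \<notin> {-R..R}"
    hence "\<bar>poly P' x / poly Q' x\<bar> \<le> B1" using R by auto
    hence "poly P' x / poly Q' x \<le> B1 \<and> -(poly P' x / poly Q' x) \<le> B1" by (simp only: abs_le_iff)
    thus "-B1 \<le> F x" unfolding F_def using assms(4) by (auto simp: of_rat_minus)
  qed
  obtain B where "\<forall>x. poly Q' x \<noteq> 0 \<longrightarrow> -B \<le> F x" using glue_bound[OF compact_Icc cont out] by blast
  thus ?thesis using rat_bound_transfer[of Q B \<sigma> P] unfolding F_def P'_def Q'_def by blast
qed

lemma even_inf_case:
  fixes P Q :: "rat poly"
  assumes "Q \<noteq> 0" "degree Q < degree P" "\<forall>x. poly (map_poly of_rat Q) (x::real) \<noteq> 0" "even (degree P - degree Q)"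
  shows "\<exists>\<sigma> B. (\<sigma> = 1 \<or> \<sigma> = -1) \<and> (\<forall>v\<in>ratfun_values P Q. -B \<le> \<sigma> * v)"
proof -
  define P' where "P' = map_poly (of_rat :: rat \<Rightarrow> real) P"
  define Q' where "Q' = map_poly (of_rat :: rat \<Rightarrow> real) Q"
  define k where "k = degree P - degree Q"
  have "Q' \<noteq> 0" "degree Q' < degree P'" using assms unfolding P'_def Q'_def by auto
  from ratfun_inf_gt[OF this] obtain R c s where R: "R > 0" "c > 0" "s = 1 \<or> s = -1"
    "\<forall>x. R \<le> \<bar>x\<bar> \<longrightarrow> poly Q' x \<noteq> 0 \<and> c \<le> s * (poly P' x / poly Q' x / x ^ k)"
    unfolding P'_def Q'_def k_def by auto
  obtain \<sigma> where \<sigma>: "\<sigma> = 1 \<or> \<sigma> = -1" "of_rat \<sigma> = s" using sigma_of_real[OF R(3)] by blast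
  define F where "F x = of_rat \<sigma> * (poly P' x / poly Q' x)" for x
  have cont: "continuous_on {-R..R} F" unfolding F_def using assms(3) unfolding Q'_def
    by (intro continuous_intros) auto
  have out: "\<forall>x. x \<notin> {-R..R} \<longrightarrow> poly Q' x \<noteq> 0 \<longrightarrow> 0 \<le> F x"
  proof (intro allI impI)
    fix x assume "x \<notin> {-R..R}"
    hence x: "R \<le> \<bar>x\<bar>" "x \<noteq> 0" using R(1) by auto
    hence A: "c \<le> s * (poly P' x / poly Q' x / x ^ k)" using R(4) by auto
    have xk: "x ^ k > 0" using assms(4) x(2) unfolding k_def by (simp add: zero_less_power_eq)
    have "F x = (s * (poly P' x / poly Q' x / x ^ k)) * x ^ k" unfolding F_def \<sigma>(2) using xk x by simp
    also have "\<dots> \<ge> 0"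
    proof -
      have "0 \<le> s * (poly P' x / poly Q' x / x ^ k)" using A R(2) by linarith
      thus ?thesis by (rule mult_nonneg_nonneg) (use xk in linarith)
    qed
    finally show "0 \<le> F x" .
  qed
  obtain B where "\<forall>x. poly Q' x \<noteq> 0 \<longrightarrow> -B \<le> F x" using glue_bound[OF compact_Icc cont out] by blast
  thus ?thesis using rat_bound_transfer[of Q B \<sigma> P] \<sigma>(1) unfolding F_def P'_def Q'_def by blast
qed

lemma even_root_case:
  fixes P Q :: "rat poly"
  assumes "Q \<noteq> 0" "coprime P Q" "degree P \<le> degree Q"
    "\<forall>x. poly (map_poly of_rat Q) (x::real) = 0 \<longleftrightarrow> x = a"
    "even (order a (map_poly (of_rat :: rat \<Rightarrow> real) Q))"
  shows "\<exists>\<sigma> B. (\<sigma> = 1 \<or> \<sigma> = -1) \<and> (\<forall>v\<in>ratfun_values P Q. -B \<le> \<sigma> * v)"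
proof -
  define P' where "P' = map_poly (of_rat :: rat \<Rightarrow> real) P"
  define Q' where "Q' = map_poly (of_rat :: rat \<Rightarrow> real) Q"
  define k where "k = order a Q'"
  have Pa: "poly P' a \<noteq> 0" using coprime_no_common_root[OF assms(2), of a] assms(4) unfolding P'_def by auto
  have Q'0: "Q' \<noteq> 0" "degree P' \<le> degree Q'" using assms unfolding P'_def Q'_def by auto
  from ratfun_root[OF Q'0(1) Pa] obtain \<delta> c s where R: "\<delta> > 0" "c > 0" "s = 1 \<or> s = -1"
    "\<forall>x. 0 < \<bar>x - a\<bar> \<and> \<bar>x - a\<bar> < \<delta> \<longrightarrow> poly Q' x \<noteq> 0 \<and> c \<le> s * (poly P' x / poly Q' x * (x - a) ^ k)"
    unfolding k_def by blast
  from ratfun_inf_le[OF Q'0] obtain R B1 where R1: "\<forall>x. R \<le> \<bar>x\<bar> \<longrightarrow> poly Q' x \<noteq> 0 \<and> \<bar>poly P' x / poly Q' x\<bar> \<le> B1" by blast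
  obtain \<sigma> where \<sigma>: "\<sigma> = 1 \<or> \<sigma> = -1" "of_rat \<sigma> = s" using sigma_of_real[OF R(3)] by blast
  define F where "F x = of_rat \<sigma> * (poly P' x / poly Q' x)" for x
  define K where "K = {-R..R} - {a-\<delta><..<a+\<delta>}"
  have cK: "compact K" unfolding K_def by (intro compact_diff compact_Icc open_greaterThanLessThan)
  have "\<forall>x\<in>K. poly Q' x \<noteq> 0" using assms(4) R(1) unfolding K_def Q'_def by auto
  hence cont: "continuous_on K F" unfolding F_def
    by (intro continuous_intros) auto
  have out: "\<forall>x. x \<notin> K \<longrightarrow> poly Q' x \<noteq> 0 \<longrightarrow> min 0 (-B1) \<le> F x"
  proof (intro allI impI)
    fix x assume x: "x \<notin> K" "poly Q' x \<noteq> 0"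
    show "min 0 (-B1) \<le> F x"
    proof (cases "x \<in> {a-\<delta><..<a+\<delta>}")
      case True
      have "x \<noteq> a" using x(2) assms(4) unfolding Q'_def by auto
      hence x1: "0 < \<bar>x - a\<bar>" "\<bar>x - a\<bar> < \<delta>" using True by auto
      hence A: "c \<le> s * (poly P' x / poly Q' x * (x - a) ^ k)" using R(4) by auto
      have xk: "(x - a) ^ k > 0" using assms(5) x1(1) unfolding k_def Q'_def by (simp add: zero_less_power_eq)
      have "F x = (s * (poly P' x / poly Q' x * (x - a) ^ k)) / (x - a) ^ k" unfolding F_def \<sigma>(2) using xk \<open>x \<noteq> a\<close> by simp
      also have "\<dots> \<ge> 0" using A R(2) xk by (intro divide_nonneg_pos) auto
      finally show ?thesis by simp
    next
      case False
      hence "R \<le> \<bar>x\<bar>" using x(1) unfolding K_def by auto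
      hence "\<bar>poly P' x / poly Q' x\<bar> \<le> B1" using R1 by auto
      hence "poly P' x / poly Q' x \<le> B1 \<and> -(poly P' x / poly Q' x) \<le> B1" by (simp only: abs_le_iff)
      hence "-B1 \<le> F x" unfolding F_def using \<sigma>(1) by (auto simp: of_rat_minus)
      thus ?thesis by simp
    qed
  qed
  obtain B where "\<forall>x. poly Q' x \<noteq> 0 \<longrightarrow> -B \<le> F x" using glue_bound[OF cK cont out] by blast
  thus ?thesis using rat_bound_transfer[of Q B \<sigma> P] \<sigma>(1) unfolding F_def P'_def Q'_def by blast
qed


lemma parta:
  fixes P Q :: "rat poly"
  assumes "Q \<noteq> 0" "coprime P Q" "WP P Q"
  shows "(\<exists>z1\<in>real_poles P Q. \<exists>z2\<in>real_poles P Q. z1 \<noteq> z2) \<or> (\<exists>z\<in>real_poles P Q. odd (pole_order P Q z))"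
proof (rule ccontr)
  assume H: "\<not> ?thesis"
  have "\<exists>\<sigma> B. (\<sigma> = 1 \<or> \<sigma> = -1) \<and> (\<forall>v\<in>ratfun_values P Q. -B \<le> \<sigma> * v)"
  proof (cases "degree Q < degree P")
    case True
    hence N: "None \<in> real_poles P Q" by (simp add: poles_None)
    have nr: "\<forall>x. poly (map_poly of_rat Q) (x::real) \<noteq> 0"
    proof (intro allI notI)
      fix x assume "poly (map_poly of_rat Q) (x::real) = 0"
      hence "Some x \<in> real_poles P Q" by (simp add: poles_Some)
      thus False using H N by blast
    qed
    have "even (degree P - degree Q)" using H N unfolding pole_order_def by auto
    thus ?thesis using even_inf_case[OF assms(1) True nr] by blast
  next
    case False
    hence le: "degree P \<le> degree Q" by simp
    show ?thesis
    proof (cases "\<exists>a. poly (map_poly of_rat Q) (a::real) = 0")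
      case True
      then obtain a where a: "poly (map_poly of_rat Q) (a::real) = 0" by blast
      hence Sa: "Some a \<in> real_poles P Q" by (simp add: poles_Some)
      have uniq: "\<forall>x. poly (map_poly of_rat Q) (x::real) = 0 \<longleftrightarrow> x = a"
      proof (intro allI iffI)
        fix x assume "poly (map_poly of_rat Q) (x::real) = 0"
        hence "Some x \<in> real_poles P Q" by (simp add: poles_Some)
        thus "x = a" using H Sa by blast
      qed (use a in simp)
      have "even (order a (map_poly (of_rat :: rat \<Rightarrow> real) Q))" using H Sa unfolding pole_order_def by auto
      thus ?thesis using even_root_case[OF assms(1,2) le uniq] by blast
    next
      case False
      hence "\<forall>x. poly (map_poly of_rat Q) (x::real) \<noteq> 0" by auto
      from bounded_case[OF assms(1) le this, of 1] obtain B where "\<forall>v\<in>ratfun_values P Q. -B \<le> 1 * v" by blast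
      thus ?thesis by (intro exI[of _ "1::rat"] exI[of _ B]) simp
    qed
  qed
  then obtain \<sigma> B where "\<sigma> = 1 \<or> \<sigma> = -1" "\<forall>v\<in>ratfun_values P Q. -B \<le> \<sigma> * v" by blast
  from notbase_of_bounded[OF this] assms(3) show False unfolding WP_def by blast
qed

lemma partc:
  fixes P Q :: "rat poly"
  assumes "Q \<noteq> 0" "EWP P Q"
  shows "real_poles P Q \<noteq> {}"
proof
  assume E: "real_poles P Q = {}"
  hence le: "degree P \<le> degree Q" using poles_None[of P Q] by auto
  have nr: "\<forall>x. poly (map_poly of_rat Q) (x::real) \<noteq> 0" using E poles_Some[of _ P Q] by auto
  obtain B1 where B1: "\<forall>v\<in>ratfun_values P Q. -B1 \<le> 1 * v" using bounded_case[OF assms(1) le nr, of 1] by auto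
  obtain B2 where B2: "\<forall>v\<in>ratfun_values P Q. -B2 \<le> -1 * v" using bounded_case[OF assms(1) le nr, of "-1"] by auto
  have "\<forall>v\<in>ratfun_values P Q. \<bar>v\<bar> \<le> max B1 B2" using B1 B2 by fastforce
  from notvbase_of_bounded[OF this] assms(2) show False unfolding EWP_def by blast
qed


definition goodk :: "nat \<Rightarrow> (int \<Rightarrow> int) \<Rightarrow> nat \<Rightarrow> int \<Rightarrow> bool" where
  "goodk p G k r \<longleftrightarrow> (\<forall>j. \<exists>n. [n = r] (mod int p ^ k) \<and> int p ^ j dvd G n)"

primrec useq :: "nat \<Rightarrow> (int \<Rightarrow> int) \<Rightarrow> nat \<Rightarrow> int" where
  "useq p G 0 = 0"
| "useq p G (Suc k) = (SOME r'. [r' = useq p G k] (mod int p ^ k) \<and> goodk p G (Suc k) r')"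

lemma goodk_step:
  assumes p: "p \<ge> 2" and cong: "\<And>M x y. [x = y] (mod M) \<Longrightarrow> [G x = G y] (mod M)"
    and g: "goodk p G k r"
  shows "\<exists>r'. [r' = r] (mod int p ^ k) \<and> goodk p G (Suc k) r'"
proof (rule ccontr)
  assume H: "\<not> ?thesis"
  have "\<forall>t. \<exists>j. \<forall>n. [n = r + int t * int p ^ k] (mod int p ^ Suc k) \<longrightarrow> \<not> int p ^ j dvd G n"
  proof
    fix t
    have "[r + int t * int p ^ k = r] (mod int p ^ k)" by (simp add: cong_iff_dvd_diff)
    hence "\<not> goodk p G (Suc k) (r + int t * int p ^ k)" using H by blast
    thus "\<exists>j. \<forall>n. [n = r + int t * int p ^ k] (mod int p ^ Suc k) \<longrightarrow> \<not> int p ^ j dvd G n"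
      unfolding goodk_def by blast
  qed
  then obtain jf where jf: "\<And>t n. [n = r + int t * int p ^ k] (mod int p ^ Suc k) \<Longrightarrow> \<not> int p ^ jf t dvd G n"
    by metis
  define J where "J = (\<Sum>t<p. jf t)"
  obtain n where n: "[n = r] (mod int p ^ k)" "int p ^ J dvd G n" using g unfolding goodk_def by blast
  obtain w where w: "n = r + int p ^ k * w" using n(1) cong_iff_lin[of r n] by (metis cong_sym)
  define t where "t = nat (w mod int p)"
  have tp: "t < p" using p unfolding t_def by (simp add: nat_less_iff)
  have wt: "w = int t + int p * (w div int p)" using p unfolding t_def by simp
  have "n = r + int t * int p ^ k + int p ^ Suc k * (w div int p)"
    unfolding w by (subst wt) (simp add: algebra_simps)
  hence "[n = r + int t * int p ^ k] (mod int p ^ Suc k)"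
    by (metis cong_add_lcancel_0 cong_mult_self_left add.commute)
  hence "\<not> int p ^ jf t dvd G n" by (rule jf)
  moreover have "jf t \<le> J" unfolding J_def using tp by (intro member_le_sum) auto
  hence "int p ^ jf t dvd G n" using n(2) by (meson dvd_trans le_imp_power_dvd)
  ultimately show False by blast
qed

lemma koenig:
  assumes p: "p \<ge> 2" and cong: "\<And>M x y. [x = y] (mod M) \<Longrightarrow> [G x = G y] (mod M)"
    and h: "\<forall>K. \<exists>n. int p ^ K dvd G n"
  shows "padic_int_seq p (useq p G) \<and> (\<forall>k. int p ^ k dvd G (useq p G k))"
proof -
  have gk: "goodk p G k (useq p G k)" for k
  proof (induction k)
    case 0
    thus ?case using h unfolding goodk_def by simp
  next
    case (Suc k)
    from someI_ex[OF goodk_step[OF p cong Suc]] show ?case by simp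
  qed
  have c: "[useq p G (Suc k) = useq p G k] (mod int p ^ k)" for k
    using someI_ex[OF goodk_step[OF p cong gk[of k]]] by simp
  have "padic_int_seq p (useq p G)" unfolding padic_int_seq_def using c by (simp add: cong_iff_dvd_diff)
  moreover have "int p ^ k dvd G (useq p G k)" for k
  proof -
    obtain n where n: "[n = useq p G k] (mod int p ^ k)" "int p ^ k dvd G n" using gk[of k] unfolding goodk_def by blast
    have "[G n = G (useq p G k)] (mod int p ^ k)" using cong[OF n(1)] .
    thus ?thesis using n(2) cong_dvd_iff by blast
  qed
  ultimately show ?thesis by blast
qed


definition Zp :: "nat \<Rightarrow> rat set" where
  "Zp p = {x. \<exists>n d. \<not> int p dvd d \<and> x = of_int n / of_int d}"

lemma Zp_div: "\<not> int p dvd d \<Longrightarrow> of_int n / of_int d \<in> Zp p"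
  unfolding Zp_def by blast

lemma p_not_unit:
  assumes "prime p" shows "\<not> is_unit (int p)"
proof
  assume "is_unit (int p)"
  hence "\<not> prime (int p)" by (rule not_prime_unit)
  thus False using assms by simp
qed

lemma Zp_int: "prime p \<Longrightarrow> of_int n \<in> Zp p"
  using Zp_div[of p 1 n] p_not_unit[of p] by simp

lemma Zp_add:
  assumes "prime p" "x \<in> Zp p" "y \<in> Zp p"
  shows "x + y \<in> Zp p"
proof -
  obtain n1 d1 where 1: "\<not> int p dvd d1" "x = of_int n1 / of_int d1" using assms(2) unfolding Zp_def by blast
  obtain n2 d2 where 2: "\<not> int p dvd d2" "y = of_int n2 / of_int d2" using assms(3) unfolding Zp_def by blast
  have d: "d1 \<noteq> 0" "d2 \<noteq> 0" using 1 2 by auto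
  have "\<not> int p dvd d1 * d2" using 1 2 assms(1) by (simp add: prime_dvd_mult_iff)
  hence "of_int (n1 * d2 + n2 * d1) / of_int (d1 * d2) \<in> Zp p" by (rule Zp_div)
  moreover have "x + y = of_int (n1 * d2 + n2 * d1) / of_int (d1 * d2)" using d 1 2 by (simp add: field_simps)
  ultimately show ?thesis by simp
qed

lemma Zp_mult:
  assumes "prime p" "x \<in> Zp p" "y \<in> Zp p"
  shows "x * y \<in> Zp p"
proof -
  obtain n1 d1 where 1: "\<not> int p dvd d1" "x = of_int n1 / of_int d1" using assms(2) unfolding Zp_def by blast
  obtain n2 d2 where 2: "\<not> int p dvd d2" "y = of_int n2 / of_int d2" using assms(3) unfolding Zp_def by blast
  have "\<not> int p dvd d1 * d2" using 1 2 assms(1) by (simp add: prime_dvd_mult_iff)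
  hence "of_int (n1 * n2) / of_int (d1 * d2) \<in> Zp p" by (rule Zp_div)
  moreover have "x * y = of_int (n1 * n2) / of_int (d1 * d2)" using 1 2 by simp
  ultimately show ?thesis by simp
qed

lemma Zp_sum:
  assumes "prime p" "\<forall>i\<in>A. f i \<in> Zp p"
  shows "sum f A \<in> Zp p"
  using assms(2)
proof (induction A rule: infinite_finite_induct)
  case (infinite A) thus ?case using Zp_int[OF assms(1), of 0] by simp
next
  case empty thus ?case using Zp_int[OF assms(1), of 0] by simp
next
  case (insert x F) thus ?case using Zp_add[OF assms(1)] by simp
qed

lemma Zp_inv_p: "prime p \<Longrightarrow> 1 / of_nat p \<notin> Zp p"
proof
  assume p: "prime p" and "1 / of_nat p \<in> Zp p"
  then obtain n d where nd: "\<not> int p dvd d" "1 / of_nat p = (of_int n / of_int d :: rat)" unfolding Zp_def by blast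
  have d0: "d \<noteq> 0" using nd by auto
  have p0: "(of_nat p :: rat) \<noteq> 0" using p by (simp add: prime_gt_0_nat)
  have "(of_int d :: rat) = of_int (int p * n)" using nd(2) d0 p0 by (simp add: field_simps)
  hence "d = int p * n" by (simp only: of_int_eq_iff)
  thus False using nd(1) by simp
qed

lemma Zp_mono:
  assumes "prime p" "of_nat p ^ J * x \<in> Zp p" "J \<le> K"
  shows "of_nat p ^ K * x \<in> Zp p"
proof -
  have e: "(of_nat p::rat) ^ K = of_nat p ^ (K - J) * of_nat p ^ J" using assms(3) by (simp flip: power_add)
  have "of_nat p ^ K * x = of_nat p ^ (K - J) * (of_nat p ^ J * x)" unfolding e by (simp only: mult.assoc)
  moreover have "(of_nat p::rat) ^ (K - J) \<in> Zp p" using Zp_int[OF assms(1), of "int p ^ (K-J)"] by simp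
  hence "of_nat p ^ (K - J) * (of_nat p ^ J * x) \<in> Zp p" by (rule Zp_mult[OF assms(1) _ assms(2)])
  ultimately show ?thesis by metis
qed

lemma pdecomp:
  assumes "prime p" "(G::int) \<noteq> 0"
  shows "\<exists>v w. G = int p ^ v * w \<and> \<not> int p dvd w"
proof -
  have "\<not> is_unit (int p)" using p_not_unit[OF assms(1)] .
  from multiplicity_decompose'[OF assms(2) this] show ?thesis by metis
qed

lemma DL:
  assumes "prime p" "(G::int) \<noteq> 0" "\<not> int p ^ Suc J dvd G"
  shows "of_nat p ^ J * (of_int n / of_int G) \<in> Zp p"
proof -
  obtain v w where vw: "G = int p ^ v * w" "\<not> int p dvd w" using pdecomp[OF assms(1,2)] by blast
  have "v \<le> J"
  proof (rule ccontr)
    assume "\<not> v \<le> J"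
    hence "int p ^ Suc J dvd int p ^ v" by (intro le_imp_power_dvd) simp
    hence "int p ^ Suc J dvd G" unfolding vw by simp
    thus False using assms(3) by simp
  qed
  have p0: "(of_nat p :: rat) \<noteq> 0" using assms(1) by (simp add: prime_gt_0_nat)
  have w0: "w \<noteq> 0" using vw by auto
  have "of_nat p ^ J * (of_int n / of_int G) = (of_int (int p ^ (J - v) * n) / of_int w :: rat)"
  proof -
    have "(of_nat p ^ J :: rat) = of_nat p ^ (J - v) * of_nat p ^ v" using \<open>v \<le> J\<close> by (simp flip: power_add)
    thus ?thesis unfolding vw using p0 w0 by (simp add: field_simps)
  qed
  moreover have "(of_int (int p ^ (J - v) * n) / of_int w :: rat) \<in> Zp p" by (rule Zp_div[OF vw(2)])
  ultimately show ?thesis by simp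
qed

lemma notvbase_padic:
  fixes V :: "rat set"
  assumes "prime p" "\<forall>v\<in>V. of_nat p ^ K * v \<in> Zp p"
  shows "\<not> is_virtual_base V"
proof
  assume "is_virtual_base V"
  then obtain N where N: "\<forall>r::rat. \<exists>(x::nat \<Rightarrow> rat) (e::nat \<Rightarrow> rat).
      (\<forall>i<N. x i \<in> V \<and> (e i = 1 \<or> e i = -1)) \<and> r = (\<Sum>i<N. e i * x i)" unfolding is_virtual_base_def by blast
  define r :: rat where "r = 1 / of_nat p ^ Suc K"
  obtain x e where xe: "\<forall>i<N. x i \<in> V \<and> (e i = 1 \<or> e i = -1)" "r = (\<Sum>i<N. e i * x i)" using N by blast
  have "of_nat p ^ K * r = (\<Sum>i<N. e i * (of_nat p ^ K * x i))" unfolding xe(2) by (simp add: sum_distrib_left algebra_simps)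
  also have "\<dots> \<in> Zp p"
  proof (rule Zp_sum[OF assms(1)], rule ballI)
    fix i assume "i \<in> {..<N}"
    hence "x i \<in> V" "e i = 1 \<or> e i = -1" using xe(1) by auto
    moreover have "e i \<in> Zp p" if "e i = 1 \<or> e i = -1"
      using that Zp_int[OF assms(1), of 1] Zp_int[OF assms(1), of "-1"] by auto
    ultimately show "e i * (of_nat p ^ K * x i) \<in> Zp p" using assms(2) Zp_mult[OF assms(1)] by blast
  qed
  finally have "of_nat p ^ K * r \<in> Zp p" .
  moreover have "of_nat p ^ K * r = 1 / of_nat p" using assms(1) unfolding r_def by (simp add: prime_gt_0_nat)
  ultimately show False using Zp_inv_p[OF assms(1)] by simp
qed


lemma denom_exists:
  fixes q :: "rat poly"
  shows "\<exists>d::int. d > 0 \<and> (\<forall>i. of_int d * coeff q i \<in> \<int>)"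
proof (induction q)
  case 0
  show ?case by (intro exI[of _ 1]) simp
next
  case (pCons a q)
  then obtain d where d: "d > 0" "\<forall>i. of_int d * coeff q i \<in> \<int>" by blast
  obtain n m where nm: "quotient_of a = (n, m)" by (cases "quotient_of a")
  have m0: "m > 0" using quotient_of_denom_pos[OF nm] .
  have a: "a = of_int n / of_int m" using quotient_of_div[OF nm] .
  have "of_int (d * m) * coeff (pCons a q) i \<in> \<int>" for i
  proof (cases i)
    case 0
    have "of_int (d * m) * coeff (pCons a q) i = of_int (d * n)" using m0 0 unfolding a by simp
    thus ?thesis by (metis Ints_of_int)
  next
    case (Suc j)
    have "of_int (d * m) * coeff q j = of_int m * (of_int d * coeff q j)" by simp
    thus ?thesis using Suc d(2) by (metis Ints_mult Ints_of_int coeff_pCons_Suc)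
  qed
  thus ?case using d(1) m0 by (intro exI[of _ "d * m"]) simp
qed

lemma common_denom:
  fixes P Q :: "rat poly"
  obtains L :: int and h g :: "int poly" where "L > 0"
    "P = smult (1 / of_int L) (map_poly of_int h)" "Q = smult (1 / of_int L) (map_poly of_int g)"
proof -
  obtain d1 where d1: "d1 > 0" "\<forall>i. of_int d1 * coeff P i \<in> \<int>" using denom_exists by blast
  obtain d2 where d2: "d2 > 0" "\<forall>i. of_int d2 * coeff Q i \<in> \<int>" using denom_exists by blast
  define L where "L = d1 * d2"
  have "\<forall>i. coeff (smult (of_int L) P) i \<in> \<int>"
    using d1(2) unfolding L_def by (metis Ints_mult Ints_of_int coeff_smult mult.assoc mult.commute of_int_mult)
  then obtain h where h: "smult (of_int L) P = map_poly of_int h" by (metis intpolyE)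
  have "\<forall>i. coeff (smult (of_int L) Q) i \<in> \<int>"
    using d2(2) unfolding L_def by (metis Ints_mult Ints_of_int coeff_smult mult.assoc of_int_mult)
  then obtain g where g: "smult (of_int L) Q = map_poly of_int g" by (metis intpolyE)
  have L0: "L > 0" unfolding L_def using d1 d2 by simp
  have "P = smult (1 / of_int L) (map_poly of_int h)" unfolding h[symmetric] using L0 by simp
  moreover have "Q = smult (1 / of_int L) (map_poly of_int g)" unfolding g[symmetric] using L0 by simp
  ultimately show ?thesis using L0 that by blast
qed

definition hs :: "int poly \<Rightarrow> nat \<Rightarrow> int \<Rightarrow> int \<Rightarrow> int" where
  "hs q D s t = (\<Sum>i\<le>D. coeff q i * s ^ i * t ^ (D - i))"

lemma poly_ext_sum:
  fixes q :: "'a::comm_semiring_1 poly"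
  assumes "degree q \<le> D"
  shows "poly q x = (\<Sum>i\<le>D. coeff q i * x ^ i)"
proof -
  have "poly q x = (\<Sum>i\<le>degree q. coeff q i * x ^ i)" by (rule poly_altdef)
  also have "\<dots> = (\<Sum>i\<le>D. coeff q i * x ^ i)"
    using assms by (intro sum.mono_neutral_left) (auto simp: coeff_eq_0)
  finally show ?thesis .
qed

lemma hs_eval:
  fixes q :: "int poly"
  assumes "degree q \<le> D" "t \<noteq> 0"
  shows "of_int t ^ D * poly (map_poly of_int q) (of_int s / of_int t) = (of_int (hs q D s t) :: rat)"
proof -
  have "poly (map_poly (of_int :: int \<Rightarrow> rat) q) (of_int s / of_int t) = (\<Sum>i\<le>D. of_int (coeff q i) * (of_int s / of_int t) ^ i)"
    using assms(1) by (subst poly_ext_sum[of _ D]) (simp_all add: degree_map_poly coeff_map_poly)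
  hence "of_int t ^ D * poly (map_poly (of_int :: int \<Rightarrow> rat) q) (of_int s / of_int t) =
      (\<Sum>i\<le>D. of_int (coeff q i) * (of_int s / of_int t) ^ i * of_int t ^ D)"
    by (simp add: sum_distrib_left algebra_simps)
  also have "\<dots> = (\<Sum>i\<le>D. of_int (coeff q i * s ^ i * t ^ (D - i)))"
  proof (rule sum.cong[OF refl])
    fix i assume "i \<in> {..D}"
    hence "(of_int t :: rat) ^ D = of_int t ^ i * of_int t ^ (D - i)" by (simp flip: power_add)
    thus "of_int (coeff q i) * (of_int s / of_int t) ^ i * of_int t ^ D = (of_int (coeff q i * s ^ i * t ^ (D - i)) :: rat)"
      using assms(2) by (simp add: power_divide field_simps)
  qed
  finally show ?thesis unfolding hs_def by simp
qed


definition Gs :: "int poly \<Rightarrow> nat \<Rightarrow> nat \<Rightarrow> int \<Rightarrow> int" where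
  "Gs g e p y = (\<Sum>i\<le>degree g. coeff g i * y ^ i * int p ^ (e * (degree g - i)))"

lemma Gs_cong: "[x = y] (mod M) \<Longrightarrow> [Gs g e p x = Gs g e p y] (mod M)"
  unfolding Gs_def by (intro cong_sum cong_scalar_right cong_scalar_left cong_pow)

lemma inv_step:
  assumes "prime p" "\<not> int p dvd t'" "int p ^ K dvd hs g (degree g) n' (int p ^ e * t')"
  shows "\<exists>n. int p ^ K dvd Gs g e p n"
proof -
  define D where "D = degree g"
  have "coprime (int p) t'" using assms(1,2) by (intro prime_imp_coprime) simp_all
  hence "coprime t' (int p ^ K)" by (simp add: coprime_commute)
  then obtain w where w: "[t' * w = 1] (mod int p ^ K)" using cong_solve_coprime_int by blast
  have eq: "w ^ D * hs g D n' (int p ^ e * t') =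
      (\<Sum>i\<le>D. coeff g i * (n' * w) ^ i * int p ^ (e * (D - i)) * (t' * w) ^ (D - i))"
    unfolding hs_def sum_distrib_left
  proof (rule sum.cong[OF refl])
    fix i assume "i \<in> {..D}"
    hence wD: "w ^ D = w ^ i * w ^ (D - i)" by (simp flip: power_add)
    show "w ^ D * (coeff g i * n' ^ i * (int p ^ e * t') ^ (D - i)) =
        coeff g i * (n' * w) ^ i * int p ^ (e * (D - i)) * (t' * w) ^ (D - i)"
    proof -
      have pe: "(int p ^ e) ^ (D - i) = int p ^ (e * (D - i))" by (simp only: power_mult)
      show ?thesis unfolding wD by (simp only: pe power_mult_distrib mult_ac)
    qed
  qed
  have "[(\<Sum>i\<le>D. coeff g i * (n' * w) ^ i * int p ^ (e * (D - i)) * (t' * w) ^ (D - i)) =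
         (\<Sum>i\<le>D. coeff g i * (n' * w) ^ i * int p ^ (e * (D - i)) * 1 ^ (D - i))] (mod int p ^ K)"
    using w by (intro cong_sum cong_scalar_left cong_pow)
  hence "[w ^ D * hs g D n' (int p ^ e * t') = Gs g e p (n' * w)] (mod int p ^ K)"
    unfolding eq by (simp add: Gs_def D_def)
  moreover have "int p ^ K dvd w ^ D * hs g D n' (int p ^ e * t')" using assms(3) unfolding D_def by simp
  ultimately show ?thesis using cong_dvd_iff by blast
qed

lemma K0_exists:
  assumes "prime p" "Q = smult c (map_poly of_int g)" "c \<noteq> 0" "\<not> has_Qp_root p Q"
  shows "\<exists>K0. \<forall>n' t'. \<not> int p dvd t' \<longrightarrow> \<not> int p ^ Suc K0 dvd hs g (degree g) n' (int p ^ e * t')"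
proof (rule ccontr)
  assume "\<not> ?thesis"
  hence H: "\<forall>K0. \<exists>n' t'. \<not> int p dvd t' \<and> int p ^ Suc K0 dvd hs g (degree g) n' (int p ^ e * t')" by blast
  have "\<forall>K. \<exists>n. int p ^ K dvd Gs g e p n"
  proof
    fix K
    obtain n' t' where nt: "\<not> int p dvd t'" "int p ^ Suc K dvd hs g (degree g) n' (int p ^ e * t')" using H by blast
    have "int p ^ K dvd int p ^ Suc K" by (simp add: le_imp_power_dvd)
    hence "int p ^ K dvd hs g (degree g) n' (int p ^ e * t')" using nt(2) dvd_trans by blast
    thus "\<exists>n. int p ^ K dvd Gs g e p n" using inv_step[OF assms(1) nt(1)] by blast
  qed
  from koenig[OF _ Gs_cong this] assms(1) obtain u where
    u: "padic_int_seq p u" "\<forall>k. int p ^ k dvd Gs g e p (u k)" using prime_ge_2_nat by blast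
  have "has_Qp_root p Q" unfolding has_Qp_root_def
    using assms(2,3) u unfolding Gs_def by blast
  thus False using assms(4) by blast
qed


lemma exists_e:
  assumes "prime p" "(x::int) \<noteq> 0"
  shows "\<exists>e. \<not> int p ^ Suc e dvd x"
proof (intro exI notI)
  define e where "e = nat \<bar>x\<bar>"
  assume "int p ^ Suc e dvd x"
  hence "\<bar>int p ^ Suc e\<bar> \<le> \<bar>x\<bar>" using dvd_imp_le_int[OF assms(2)] by blast
  moreover have "(2::int) ^ Suc e \<le> int p ^ Suc e" using prime_ge_2_nat[OF assms(1)] by (intro power_mono) auto
  moreover have "Suc e < 2 ^ Suc e" by (rule less_exp)
  hence "int (Suc e) < int (2 ^ Suc e)" by (simp only: of_nat_less_iff)
  hence "int (Suc e) < 2 ^ Suc e" by simp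
  ultimately show False unfolding e_def by simp
qed

lemma caseA:
  assumes p: "prime p" and gD: "\<not> int p ^ Suc e dvd coeff g D" and dt: "int p ^ Suc e dvd t"
    and cst: "coprime s t"
  shows "\<not> int p ^ Suc e dvd hs g D s t"
proof
  assume H: "int p ^ Suc e dvd hs g D s t"
  have "int p dvd int p ^ Suc e" by simp
  hence pt: "int p dvd t" using dt by (rule dvd_trans)
  have ps: "\<not> int p dvd s"
  proof
    assume "int p dvd s"
    hence "is_unit (int p)" using coprime_common_divisor[OF cst _ pt] by blast
    thus False using p_not_unit[OF p] by blast
  qed
  have "hs g D s t = (\<Sum>i<D. coeff g i * s ^ i * t ^ (D - i)) + coeff g D * s ^ D"
    unfolding hs_def lessThan_Suc_atMost[symmetric] by simp
  moreover have "[(\<Sum>i<D. coeff g i * s ^ i * t ^ (D - i)) = (\<Sum>i<D. 0)] (mod int p ^ Suc e)"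
  proof (rule cong_sum)
    fix i assume "i \<in> {..<D}"
    hence "t dvd t ^ (D - i)" by (simp add: dvd_power)
    hence "int p ^ Suc e dvd t ^ (D - i)" using dt by (rule dvd_trans[rotated])
    hence "int p ^ Suc e dvd coeff g i * s ^ i * t ^ (D - i)" by (rule dvd_mult)
    thus "[coeff g i * s ^ i * t ^ (D - i) = 0] (mod int p ^ Suc e)" by (simp add: cong_0_iff)
  qed
  hence "[(\<Sum>i<D. coeff g i * s ^ i * t ^ (D - i)) + coeff g D * s ^ D = 0 + coeff g D * s ^ D] (mod int p ^ Suc e)"
    by (intro cong_add) simp_all
  ultimately have "[hs g D s t = coeff g D * s ^ D] (mod int p ^ Suc e)" by simp
  hence "int p ^ Suc e dvd coeff g D * s ^ D" using H cong_dvd_iff by blast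
  moreover have "coprime (int p) s" using p ps by (intro prime_imp_coprime) simp_all
  hence "coprime (int p ^ Suc e) (s ^ D)" by simp
  ultimately have "int p ^ Suc e dvd coeff g D" using coprime_dvd_mult_left_iff by blast
  thus False using gD by blast
qed


lemma padic_bound:
  fixes P Q :: "rat poly" and h g :: "int poly"
  assumes p: "prime p" and L: "L > 0"
    and hP: "P = smult (1 / of_int L) (map_poly of_int h)"
    and gQ: "Q = smult (1 / of_int L) (map_poly of_int g)"
    and Q0: "Q \<noteq> 0" and deg: "degree P \<le> degree Q" and nr: "\<not> has_Qp_root p Q"
  shows "\<exists>K. \<forall>v\<in>ratfun_values P Q. of_nat p ^ K * v \<in> Zp p"
proof -
  define D where "D = degree g"
  have L0: "(1 / of_int L :: rat) \<noteq> 0" using L by simp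
  have dP: "degree P = degree h" unfolding hP using L0 by (simp add: degree_map_poly)
  have dQ: "degree Q = degree g" unfolding gQ using L0 by (simp add: degree_map_poly)
  have g0: "g \<noteq> 0" using Q0 gQ by auto
  have hD: "degree h \<le> D" using deg dP dQ unfolding D_def by simp
  have gDD: "degree g \<le> D" unfolding D_def by simp
  have gD0: "coeff g D \<noteq> 0" using g0 unfolding D_def by simp
  obtain e where e: "\<not> int p ^ Suc e dvd coeff g D" using exists_e[OF p gD0] by blast
  obtain K0 where K0: "\<forall>n' t'. \<not> int p dvd t' \<longrightarrow> \<not> int p ^ Suc K0 dvd hs g (degree g) n' (int p ^ e * t')"
    using K0_exists[OF p gQ L0 nr] by blast
  define K where "K = max e K0"
  have pos: "(of_nat p :: rat) \<noteq> 0" using p by (simp add: prime_gt_0_nat)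
  have rep: "v = of_int (hs h D s t) / of_int (hs g D s t) \<and> hs g D s t \<noteq> 0"
    if v: "v = poly P a / poly Q a" "poly Q a \<noteq> 0" and a: "a = of_int s / of_int t" and t0: "t \<noteq> 0" for v a s t
  proof -
    have ev: "poly P a / poly Q a = poly (map_poly of_int h) a / poly (map_poly of_int g) a"
      unfolding hP gQ using L0 by simp
    have gne: "poly (map_poly (of_int :: int \<Rightarrow> rat) g) a \<noteq> 0" using v(2) unfolding gQ by simp
    have tD: "(of_int t :: rat) ^ D \<noteq> 0" using t0 by simp
    have eh: "of_int t ^ D * poly (map_poly of_int h) a = (of_int (hs h D s t) :: rat)" unfolding a by (rule hs_eval[OF hD t0])
    have eg: "of_int t ^ D * poly (map_poly of_int g) a = (of_int (hs g D s t) :: rat)" unfolding a by (rule hs_eval[OF gDD t0])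
    have "hs g D s t \<noteq> 0" using eg gne tD by (metis mult_eq_0_iff of_int_eq_0_iff)
    moreover have "v = of_int (hs h D s t) / of_int (hs g D s t)"
      unfolding v(1) ev eh[symmetric] eg[symmetric] using tD t0 by simp
    ultimately show ?thesis by blast
  qed
  have "of_nat p ^ K * v \<in> Zp p" if vV: "v \<in> ratfun_values P Q" for v
  proof -
    obtain a where a: "poly Q a \<noteq> 0" "v = poly P a / poly Q a" using vV unfolding ratfun_values_def by blast
    obtain s t where st: "quotient_of a = (s, t)" by (cases "quotient_of a")
    have t0: "t > 0" using quotient_of_denom_pos[OF st] .
    have cst: "coprime s t" using quotient_of_coprime[OF st] .
    have as: "a = of_int s / of_int t" using quotient_of_div[OF st] .
    obtain j t' where jt: "t = int p ^ j * t'" "\<not> int p dvd t'" using pdecomp[OF p, of t] t0 by auto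
    show ?thesis
    proof (cases "Suc e \<le> j")
      case True
      have "int p ^ Suc e dvd int p ^ j" using True by (rule le_imp_power_dvd)
      hence dt: "int p ^ Suc e dvd t" unfolding jt by simp
      have R: "v = of_int (hs h D s t) / of_int (hs g D s t)" "hs g D s t \<noteq> 0"
        using rep[OF a(2) a(1) as] t0 by auto
      have "\<not> int p ^ Suc e dvd hs g D s t" by (rule caseA[OF p e dt cst])
      hence "of_nat p ^ e * v \<in> Zp p" unfolding R(1) by (rule DL[OF p R(2)])
      thus ?thesis using Zp_mono[OF p] unfolding K_def by (metis max.cobounded1)
    next
      case False
      hence je: "j \<le> e" by simp
      define n' where "n' = s * int p ^ (e - j)"
      define T where "T = int p ^ e * t'"
      have t'0: "t' \<noteq> 0" using jt t0 by auto
      have T0: "T \<noteq> 0" unfolding T_def using t'0 p by (simp add: prime_gt_0_nat)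
      have pe: "(int p ^ e :: int) = int p ^ j * int p ^ (e - j)" using je by (simp flip: power_add)
      have aT: "a = of_int n' / of_int T"
      proof -
        have "(of_int (int p ^ (e - j)) :: rat) \<noteq> 0" using pos by simp
        hence "(of_int s / of_int t :: rat) = of_int s * of_int (int p ^ (e - j)) / (of_int t * of_int (int p ^ (e - j)))"
          by simp
        also have "\<dots> = of_int n' / of_int T" unfolding n'_def T_def jt pe by (simp add: mult_ac)
        finally show ?thesis using as by simp
      qed
      have R: "v = of_int (hs h D n' T) / of_int (hs g D n' T)" "hs g D n' T \<noteq> 0"
        using rep[OF a(2) a(1) aT T0] by auto
      have "\<not> int p ^ Suc K0 dvd hs g D n' T" using K0 jt(2) unfolding T_def D_def by blast
      hence "of_nat p ^ K0 * v \<in> Zp p" unfolding R(1) by (rule DL[OF p R(2)])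
      thus ?thesis using Zp_mono[OF p] unfolding K_def by (metis max.cobounded2)
    qed
  qed
  thus ?thesis by blast
qed


lemma partd:
  fixes P Q :: "rat poly"
  assumes "Q \<noteq> 0" "EWP P Q" "prime p"
  shows "has_Qp_pole p P Q"
proof (rule ccontr)
  assume "\<not> has_Qp_pole p P Q"
  hence H: "degree P \<le> degree Q" "\<not> has_Qp_root p Q" unfolding has_Qp_pole_def by auto
  obtain L h g where Lhg: "L > 0" "P = smult (1 / of_int L) (map_poly of_int h)" "Q = smult (1 / of_int L) (map_poly of_int g)"
    using common_denom by blast
  obtain K where "\<forall>v\<in>ratfun_values P Q. of_nat p ^ K * v \<in> Zp p"
    using padic_bound[OF assms(3) Lhg assms(1) H] by blast
  from notvbase_padic[OF assms(3) this] assms(2) show False unfolding EWP_def by blast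
qed

theorem proposition2p5:
  fixes P Q :: "rat poly"
  assumes "Q \<noteq> 0" and "coprime P Q" and "nonconstant P Q"
  shows "(WP P Q \<longrightarrow>
            (\<exists>z1\<in>real_poles P Q. \<exists>z2\<in>real_poles P Q. z1 \<noteq> z2) \<or>
            (\<exists>z\<in>real_poles P Q. odd (pole_order P Q z)))
       \<and> (is_open_base (ratfun_values P Q) \<and> (\<exists>z\<in>real_poles P Q. odd (pole_order P Q z))
            \<longrightarrow> WP P Q)
       \<and> (EWP P Q \<longrightarrow> real_poles P Q \<noteq> {})
       \<and> (EWP P Q \<longrightarrow> (\<forall>p::nat. prime p \<longrightarrow> has_Qp_pole p P Q))"
  using parta[OF assms(1,2)] partb[OF assms(1,2)] partc[OF assms(1)] partd[OF assms(1)] by blast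

end
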